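(* Consider the IMAB model with $K=2$ arms, $\mathcal{X}_1=\mathcal{X}_2=\{0,1\}$, Bernoulli parameters $p_i=p_i(1)\in[\frac25,\frac12]$ with $p_2<p_1<\frac12$, and let $\Delta=h_b(p_1)-h_b(p_2)$. Run the generic UCB algorithm with the plug-in estimator $\hat H(\boldsymbol Y,n)=h_b(\hat p(\boldsymbol Y,n))$, the upper confidence deviation $\mathrm{UCD}(\boldsymbol Y,\delta,n)=\mathrm{UCD}^{(1/2)}_{\mathrm{ber}}(\hat p(\boldsymbol Y,n),\delta,n)$, and $\delta_\alpha(t)=4t^{-\alpha}$ with $\alpha>2$. Then for every $t\ge 2$, \[ R(t)\leq \frac{784(\frac12-p_2)^2\alpha\log t}{\Delta}+60\alpha\log t+\frac{8(\alpha-1)}{\alpha-2}\Delta. \]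
   Context: IMAB model: there are $K\ge2$ arms; arm $i$ emits i.i.d. symbols from an unknown PMF $p_i$ on a finite alphabet $\mathcal{X}_i$, independently across rounds and arms. $H_i:=H(p_i)$ (natural log), $i^*\in\arg\max_i H_i$, $\Delta_i:=H_{i^*}-H_i$. Generic UCB algorithm: given an estimator $\hat H(\boldsymbol Y,n)$, an upper confidence deviation $\mathrm{UCD}(\boldsymbol Y,\delta,n)$ and a confidence function $\delta_\alpha(t)$, at each round $t=1,2,\ldots$ the player plays $I(t)\in\arg\max_{i\in[K]}\{\hat H(\boldsymbol X_i(t-1),N_i(t-1))+\mathrm{UCD}(\boldsymbol X_i(t-1),\delta_\alpha(t),N_i(t-1))\}$ (ties broken arbitrarily; an arm whose index is undefined, e.g. with $N_i(t-1)=0$, is treated as having index $+\infty$), where $\boldsymbol X_i(t-1)$ is the tuple of symbols observed from arm $i$ before round $t$ and $N_i(t-1)$ its length; it then observes a fresh symbol from $p_{I(t)}$, appended to $\boldsymbol X_{I(t)}$. $N_i(t)$ is the number of plays of arm $i$ in rounds $1,\ldots,t$. Pseudo-regret: $R(t):=\sum_{i:\Delta_i>0}\mathbb{E}[N_i(t)]\Delta_i$. $h_b(p):=-p\log p-(1-p)\log(1-p)$; $\hat p(\boldsymbol Y,n)$ is the empirical frequency of $1$ in $\boldsymbol Y$. $\mathrm{UCD}^{(1/2)}_{\mathrm{ber}}(q,\delta,n):=7|\frac12-q|\sqrt{\log(4/\delta)/n}+9\log(4/\delta)/n$. *)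

theory Defs
  imports "HOL-Probability.Probability"
begin

definition hb :: "real \<Rightarrow> real" where
  "hb p = - p * ln p - (1 - p) * ln (1 - p)"

text \<open>Empirical frequency of the symbol 1 (encoded as True) in an observation tuple.\<close>
definition phat :: "bool list \<Rightarrow> real" where
  "phat ys = real (length (filter id ys)) / real (length ys)"

definition UCD_ber :: "real \<Rightarrow> real \<Rightarrow> nat \<Rightarrow> real" where
  "UCD_ber q \<delta> n = 7 * \<bar>1/2 - q\<bar> * sqrt (ln (4 / \<delta>) / real n) + 9 * ln (4 / \<delta>) / real n"

definition delta_alpha :: "real \<Rightarrow> nat \<Rightarrow> real" where
  "delta_alpha \<alpha> t = 4 * real t powr (- \<alpha>)"

definition ucb_index :: "bool list \<Rightarrow> real \<Rightarrow> ereal" where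
  "ucb_index ys \<delta> =
     (if ys = [] then PInfty
      else ereal (hb (phat ys) + UCD_ber (phat ys) \<delta> (length ys)))"

text \<open>Arm i's k-th observation (k = 0,1,...) is X_i k (stack-of-rewards model).
  tb is an arbitrary tie-breaking rule, consulted only when the two indices are
  equal; it may depend on the round and the whole history; True means "play arm 1".\<close>
fun ucb_counts :: "real \<Rightarrow> (nat \<Rightarrow> bool list \<Rightarrow> bool list \<Rightarrow> bool)
                   \<Rightarrow> (nat \<Rightarrow> bool) \<Rightarrow> (nat \<Rightarrow> bool) \<Rightarrow> nat \<Rightarrow> nat \<times> nat" where
  "ucb_counts \<alpha> tb X1 X2 0 = (0, 0)"
| "ucb_counts \<alpha> tb X1 X2 (Suc t) =
     (let (n1, n2) = ucb_counts \<alpha> tb X1 X2 t;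
          o1 = map X1 [0..<n1];
          o2 = map X2 [0..<n2];
          \<delta> = delta_alpha \<alpha> (Suc t);
          i1 = ucb_index o1 \<delta>;
          i2 = ucb_index o2 \<delta>;
          play1 = (i1 > i2 \<or> (i1 = i2 \<and> tb (Suc t) o1 o2))
      in if play1 then (n1 + 1, n2) else (n1, n2 + 1))"

definition sample_pmf :: "real \<Rightarrow> real \<Rightarrow> nat \<Rightarrow> ((nat \<Rightarrow> bool) \<times> (nat \<Rightarrow> bool)) pmf" where
  "sample_pmf p1 p2 t =
     pair_pmf (Pi_pmf {..<t} False (\<lambda>_. bernoulli_pmf p1))
              (Pi_pmf {..<t} False (\<lambda>_. bernoulli_pmf p2))"

definition expected_plays :: "real \<Rightarrow> real \<Rightarrow> real \<Rightarrow> (nat \<Rightarrow> bool list \<Rightarrow> bool list \<Rightarrow> bool)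
                               \<Rightarrow> nat \<Rightarrow> nat \<Rightarrow> real" where
  "expected_plays p1 p2 \<alpha> tb i t =
     measure_pmf.expectation (sample_pmf p1 p2 t)
       (\<lambda>(X1, X2). real ((if i = 1 then fst else snd) (ucb_counts \<alpha> tb X1 X2 t)))"

definition pseudo_regret :: "real \<Rightarrow> real \<Rightarrow> real \<Rightarrow> (nat \<Rightarrow> bool list \<Rightarrow> bool list \<Rightarrow> bool)
                              \<Rightarrow> nat \<Rightarrow> real" where
  "pseudo_regret p1 p2 \<alpha> tb t =
     (let H = (\<lambda>i::nat. if i = 1 then hb p1 else hb p2);
          Hstar = max (hb p1) (hb p2)
      in \<Sum>i\<in>{i\<in>{1,2}. Hstar - H i > 0}. expected_plays p1 p2 \<alpha> tb i t * (Hstar - H i))"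

end

theory Submission
  imports Defs
begin

lemma aux_q: fixes p q :: real assumes "q \<ge> 0" "p > 0" shows "q * (ln p - ln q) \<le> p - q"
proof (cases "q = 0")
  case True then show ?thesis using assms by simp
next
  case False
  then have q: "q > 0" using assms by simp
  have "ln (p/q) \<le> p/q - 1" using q assms by (intro ln_le_minus_one) simp
  then have "q * ln (p/q) \<le> q * (p/q - 1)" using q by (intro mult_left_mono) auto
  moreover have "q * ln (p/q) = q * (ln p - ln q)" using q assms by (simp add: ln_div)
  moreover have "q * (p/q - 1) = p - q" using q by (simp add: field_simps)
  ultimately show ?thesis by simp
qed

lemma hb_concave:
  assumes "0 < p" "p < 1" "0 \<le> q" "q \<le> 1"
  shows "hb q \<le> hb p + ln ((1-p)/p) * (q - p)"
proof -
  have a: "q * (ln p - ln q) \<le> p - q" using assms by (intro aux_q) auto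
  have b: "(1-q) * (ln (1-p) - ln (1-q)) \<le> (1-p) - (1-q)" using assms by (intro aux_q) auto
  have e: "ln ((1-p)/p) = ln (1-p) - ln p" using assms by (simp add: ln_div)
  show ?thesis using a b unfolding hb_def e by (simp add: algebra_simps)
qed

lemma hb_nonneg: assumes "0 \<le> q" "q \<le> 1" shows "hb q \<ge> 0"
proof -
  have "q * ln q \<le> 0"
    using assms by (cases "q = 0") (auto intro!: mult_nonneg_nonpos)
  moreover have "(1-q) * ln (1-q) \<le> 0"
    using assms by (cases "q = 1") (auto intro!: mult_nonneg_nonpos)
  ultimately show ?thesis unfolding hb_def by simp
qed

lemma hb_le_ln2: assumes "0 \<le> q" "q \<le> 1" shows "hb q \<le> ln 2"
proof -
  have "hb q \<le> hb (1/2) + ln ((1-1/2)/(1/2)) * (q - 1/2)"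
    using assms by (intro hb_concave) auto
  also have "\<dots> = ln 2" by (simp add: hb_def ln_div)
  finally show ?thesis .
qed

lemma ln_ratio_bound: fixes a b :: real
  assumes "a + b = 1" "b \<ge> 1/5" "a \<ge> b"
  shows "ln (a/b) \<le> 7 * (a - 1/2)" "ln (a/b) \<ge> 0"
proof -
  have bp: "b > 0" using assms by simp
  have ap: "a > 0" using assms by simp
  have "ln (a/b) = ln (a/(1/2)) + ln ((1/2)/b)" using ap bp by (simp add: ln_div ln_mult)
  also have "\<dots> \<le> (a/(1/2) - 1) + ((1/2)/b - 1)"
    using ap bp by (intro add_mono ln_le_minus_one) auto
  also have "(1/2)/b - 1 = (a - 1/2) / b" using assms bp by (simp add: field_simps)
  also have "(a - 1/2)/b \<le> (a - 1/2) / (1/5)"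
    using assms bp by (intro divide_left_mono) auto
  finally show "ln (a/b) \<le> 7 * (a - 1/2)" by simp
  show "ln (a/b) \<ge> 0" using assms bp by simp
qed

lemma abs_ln_ratio:
  fixes q :: real assumes "1/5 \<le> q" "q \<le> 4/5"
  shows "\<bar>ln ((1-q)/q)\<bar> \<le> 7 * \<bar>1/2 - q\<bar>"
proof (cases "q \<le> 1/2")
  case True
  have "ln ((1-q)/q) \<le> 7 * ((1-q) - 1/2)" "ln ((1-q)/q) \<ge> 0"
    using ln_ratio_bound[of "1-q" q] assms True by auto
  then show ?thesis using True by simp
next
  case False
  have "ln (q/(1-q)) \<le> 7 * (q - 1/2)" "ln (q/(1-q)) \<ge> 0"
    using ln_ratio_bound[of q "1-q"] assms False by auto
  moreover have "ln ((1-q)/q) = - ln (q/(1-q))" using assms False by (simp add: ln_div)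
  ultimately show ?thesis using False by simp
qed

lemma idx_lower:
  fixes p q e :: real
  assumes "2/5 \<le> p" "p \<le> 1/2" "0 \<le> q" "q \<le> 1" "\<bar>q - p\<bar> < e"
  shows "hb p \<le> hb q + 7 * \<bar>1/2 - q\<bar> * e + 18 * e^2"
proof (cases "\<bar>1/2 - q\<bar> \<le> 3/10")
  case True
  then have q: "1/5 \<le> q" "q \<le> 4/5" unfolding abs_if by (auto split: if_splits)
  have "hb p \<le> hb q + ln ((1-q)/q) * (p - q)" using q assms by (intro hb_concave) auto
  also have "ln ((1-q)/q) * (p - q) \<le> \<bar>ln ((1-q)/q)\<bar> * \<bar>p - q\<bar>"
    by (metis abs_ge_self abs_mult)
  also have "\<dots> \<le> (7 * \<bar>1/2 - q\<bar>) * e"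
    using abs_ln_ratio[OF q] assms by (intro mult_mono) auto
  finally have "hb p \<le> hb q + 7 * \<bar>1/2 - q\<bar> * e" by simp
  moreover have "18 * e^2 \<ge> 0" by simp
  ultimately show ?thesis by linarith
next
  case False
  have e: "e \<ge> 1/5" using False assms unfolding abs_if by (auto split: if_splits)
  have "7 * (3/10) * (1/5) \<le> 7 * \<bar>1/2 - q\<bar> * e"
    using e False by (intro mult_mono) auto
  then have a1: "21/50 \<le> 7 * \<bar>1/2 - q\<bar> * e" by simp
  have "18 * (1/5)^2 \<le> 18 * e^2" using e by (intro mult_left_mono power_mono) auto
  then have "18/25 \<le> 18 * e^2" by (simp add: power2_eq_square)
  moreover note a1
  moreover have "hb p \<le> ln 2" using assms by (intro hb_le_ln2) auto
  moreover have "ln (2::real) \<le> 1" using ln_le_minus_one[of 2] by simp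
  moreover have "hb q \<ge> 0" using assms by (intro hb_nonneg) auto
  ultimately show ?thesis by linarith
qed

lemma idx_upper:
  fixes p q e :: real
  assumes "2/5 \<le> p" "p \<le> 1/2" "0 \<le> q" "q \<le> 1" "\<bar>q - p\<bar> \<le> e"
  shows "hb q + 7 * \<bar>1/2 - q\<bar> * sqrt 2 * e + 18 * e^2 \<le> hb p + 17 * (1/2 - p) * e + 28 * e^2"
proof -
  have e0: "e \<ge> 0" using assms by linarith
  have "hb q \<le> hb p + ln ((1-p)/p) * (q - p)" using assms by (intro hb_concave) auto
  also have "ln ((1-p)/p) * (q - p) \<le> \<bar>ln ((1-p)/p)\<bar> * \<bar>q - p\<bar>"
    by (metis abs_ge_self abs_mult)
  also have "\<dots> \<le> (7 * \<bar>1/2 - p\<bar>) * e"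
    using abs_ln_ratio[of p] assms by (intro mult_mono) auto
  finally have h: "hb q \<le> hb p + 7 * (1/2 - p) * e" using assms by simp
  have "(sqrt 2)^2 \<le> (10/7::real)^2" by (simp add: power2_eq_square)
  then have "sqrt 2 \<le> (10/7::real)" by (rule power2_le_imp_le) simp
  then have s2: "sqrt 2 * 7 \<le> (10::real)" by simp
  have "7 * \<bar>1/2 - q\<bar> * sqrt 2 * e = \<bar>1/2 - q\<bar> * (sqrt 2 * 7) * e" by simp
  also have "\<dots> \<le> ((1/2 - p) + e) * 10 * e"
    using assms e0 s2 by (intro mult_mono) auto
  finally show ?thesis using h by (simp add: algebra_simps power2_eq_square)
qed



lemma counts_sum: "fst (ucb_counts \<alpha> tb X1 X2 t) + snd (ucb_counts \<alpha> tb X1 X2 t) = t"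
  by (induction t) (auto simp: Let_def split: prod.split)

lemma counts_bound:
  fixes B1 B2 :: "nat \<Rightarrow> nat \<Rightarrow> bool" and H :: real
  assumes H1: "\<And>s m. 2 \<le> s \<Longrightarrow> s \<le> T \<Longrightarrow> 1 \<le> m \<Longrightarrow> \<not> B1 m s \<Longrightarrow>
               ucb_index (map X1 [0..<m]) (delta_alpha \<alpha> s) \<ge> ereal H"
    and H2: "\<And>s n. 2 \<le> s \<Longrightarrow> s \<le> T \<Longrightarrow> u \<le> n \<Longrightarrow> \<not> B2 n s \<Longrightarrow>
               ucb_index (map X2 [0..<n]) (delta_alpha \<alpha> s) < ereal H"
    and u: "1 \<le> u"
  shows "t \<le> T \<Longrightarrow> real (snd (ucb_counts \<alpha> tb X1 X2 t)) \<le> real u +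
           (\<Sum>s\<in>{1..t}. \<Sum>m\<in>{1..<s}. (of_bool (B1 m s) + of_bool (B2 m s) :: real))"
proof (induction t)
  case 0 then show ?case by simp
next
  case (Suc t)
  define g where "g = (\<lambda>s m. (of_bool (B1 m s) + of_bool (B2 m s) :: real))"
  define F where "F = (\<lambda>t. \<Sum>s\<in>{1..t}. \<Sum>m\<in>{1..<s}. g s m)"
  have gnn: "g s m \<ge> 0" for s m by (simp add: g_def)
  have Fnn: "F t' \<ge> 0" for t' unfolding F_def using gnn by (intro sum_nonneg) auto
  have FS: "F (Suc t) = F t + (\<Sum>m\<in>{1..<Suc t}. g (Suc t) m)"
    unfolding F_def by simp
  have inn: "(\<Sum>m\<in>{1..<Suc t}. g (Suc t) m) \<ge> 0" using gnn by (intro sum_nonneg) auto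
  have IH: "real (snd (ucb_counts \<alpha> tb X1 X2 t)) \<le> real u + F t"
    using Suc by (simp add: F_def g_def)
  obtain n1 n2 where c: "ucb_counts \<alpha> tb X1 X2 t = (n1, n2)" by (cases "ucb_counts \<alpha> tb X1 X2 t")
  have tsum: "n1 + n2 = t" using counts_sum[of \<alpha> tb X1 X2 t] c by simp
  define i1 where "i1 = ucb_index (map X1 [0..<n1]) (delta_alpha \<alpha> (Suc t))"
  define i2 where "i2 = ucb_index (map X2 [0..<n2]) (delta_alpha \<alpha> (Suc t))"
  define play1 where "play1 = (i1 > i2 \<or> (i1 = i2 \<and> tb (Suc t) (map X1 [0..<n1]) (map X2 [0..<n2])))"
  have step: "ucb_counts \<alpha> tb X1 X2 (Suc t) = (if play1 then (n1 + 1, n2) else (n1, n2 + 1))"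
    by (simp add: c Let_def play1_def i1_def i2_def)
  have goal: "real (snd (ucb_counts \<alpha> tb X1 X2 (Suc t))) \<le> real u + F (Suc t)"
  proof (cases play1)
    case True
    then show ?thesis using IH step c FS inn by simp
  next
    case False
    show ?thesis
    proof (cases "n2 < u")
      case True
      then show ?thesis using False step Fnn[of "Suc t"] by simp
    next
      case n2u: False
      then have n2: "n2 \<ge> 1" using u by simp
      have fin2: "i2 \<noteq> PInfty" using n2 unfolding i2_def ucb_index_def by auto
      have n1: "n1 \<ge> 1"
      proof (rule ccontr)
        assume "\<not> n1 \<ge> 1"
        then have "i1 = PInfty" unfolding i1_def ucb_index_def by simp
        then have play1 using fin2 unfolding play1_def by (simp add: less_PInf_Ex_of_nat)
        then show False using False by simp
      qed
      have le: "i1 \<le> i2" using False unfolding play1_def by auto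
      have s2: "2 \<le> Suc t" using n1 n2 tsum by simp
      have "B1 n1 (Suc t) \<or> B2 n2 (Suc t)"
      proof (rule ccontr)
        assume "\<not> (B1 n1 (Suc t) \<or> B2 n2 (Suc t))"
        then have "i1 \<ge> ereal H" "i2 < ereal H"
          using H1[OF s2 Suc.prems n1] H2[OF s2 Suc.prems] n2u unfolding i1_def i2_def by auto
        then show False using le by simp
      qed
      then have "1 \<le> g (Suc t) n1 \<or> 1 \<le> g (Suc t) n2" unfolding g_def by auto
      moreover have "g (Suc t) n \<le> (\<Sum>m\<in>{1..<Suc t}. g (Suc t) m)" if "n \<in> {1..<Suc t}" for n
        using that gnn by (intro member_le_sum) auto
      ultimately have "1 \<le> (\<Sum>m\<in>{1..<Suc t}. g (Suc t) m)"
        using n1 n2 tsum by force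
      then show ?thesis using IH step c FS False by simp
    qed
  qed
  then show ?case by (simp only: F_def g_def)
qed



lemma phat_card: "phat (map X [0..<m]) = real (card {i\<in>{..<m}. X i}) / real m"
proof -
  have "length (filter id (map X [0..<m])) = card {i\<in>{..<m}. X i}"
    unfolding length_filter_conv_card by (intro arg_cong[where f=card]) auto
  then show ?thesis unfolding phat_def by simp
qed

lemma phat_range: "0 \<le> phat ys" "phat ys \<le> 1"
  unfolding phat_def using length_filter_le[of id ys]
  by (auto simp: divide_le_eq_1)

lemma map_card_binomial:
  assumes "m \<le> t" "p \<in> {0..1}"
  shows "map_pmf (\<lambda>X. card {i\<in>{..<m}. X i}) (Pi_pmf {..<t} False (\<lambda>_. bernoulli_pmf p))
         = binomial_pmf m p"
proof -
  have "binomial_pmf m p = map_pmf (\<lambda>f. card {x\<in>{..<m}. f x}) (Pi_pmf {..<m} False (\<lambda>_. bernoulli_pmf p))"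
    using assms by (intro binomial_pmf_altdef') auto
  also have "Pi_pmf {..<m} False (\<lambda>_. bernoulli_pmf p) =
     map_pmf (\<lambda>f x. if x \<in> {..<m} then f x else False) (Pi_pmf {..<t} False (\<lambda>_. bernoulli_pmf p))"
    using assms by (intro Pi_pmf_subset) auto
  also have "map_pmf (\<lambda>f. card {x\<in>{..<m}. f x}) \<dots> = map_pmf (\<lambda>X. card {i\<in>{..<m}. X i}) (Pi_pmf {..<t} False (\<lambda>_. bernoulli_pmf p))"
    by (auto simp: pmf.map_comp o_def intro!: map_pmf_cong arg_cong[where f=card])
  finally show ?thesis by simp
qed

lemma prob_dev:
  assumes "1 \<le> m" "m \<le> t" "p \<in> {0..1}" "e \<ge> 0"
  shows "measure_pmf.prob (Pi_pmf {..<t} False (\<lambda>_. bernoulli_pmf p))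
           {X. e \<le> \<bar>phat (map X [0..<m]) - p\<bar>} \<le> 2 * exp (- 2 * real m * e^2)"
proof -
  have "measure_pmf.prob (Pi_pmf {..<t} False (\<lambda>_. bernoulli_pmf p))
           {X. e \<le> \<bar>phat (map X [0..<m]) - p\<bar>} =
        measure_pmf.prob (map_pmf (\<lambda>X. card {i\<in>{..<m}. X i}) (Pi_pmf {..<t} False (\<lambda>_. bernoulli_pmf p)))
           {x. e \<le> \<bar>real x / real m - p\<bar>}"
    by (simp add: measure_map_pmf phat_card vimage_def)
  also have "map_pmf (\<lambda>X. card {i\<in>{..<m}. X i}) (Pi_pmf {..<t} False (\<lambda>_. bernoulli_pmf p)) = binomial_pmf m p"
    using assms by (intro map_card_binomial) auto
  also have "measure_pmf.prob (binomial_pmf m p) {x. e \<le> \<bar>real x / real m - p\<bar>} \<le> 2 * exp (real_of_int (- 2 * int m) * e\<^sup>2)"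
    using assms by (intro binomial_distribution.prob_abs_ge') (auto simp: binomial_distribution_def)
  finally show ?thesis by simp
qed



lemma bern_powr:
  fixes h \<beta> :: real
  assumes "0 \<le> h" "h < 1" "\<beta> > 0"
  shows "(1 - h) powr (- \<beta>) \<ge> 1 + \<beta> * h"
proof -
  have "ln (1 - h) \<le> (1 - h) - 1" using assms by (intro ln_le_minus_one) auto
  then have "\<beta> * h \<le> \<beta> * (- ln (1 - h))" using assms by (intro mult_left_mono) auto
  then have "- \<beta> * ln (1 - h) \<ge> \<beta> * h" by simp
  moreover have "exp (- \<beta> * ln (1 - h)) \<ge> 1 + (- \<beta> * ln (1 - h))" by (rule exp_ge_add_one_self)
  moreover have "(1 - h) powr (- \<beta>) = exp (- \<beta> * ln (1 - h))" using assms by (simp add: powr_def)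
  ultimately show ?thesis by linarith
qed

lemma step_ineq:
  fixes s \<alpha> :: real
  assumes "s \<ge> 2" "\<alpha> > 2"
  shows "(\<alpha> - 2) * (s - 1) * s powr (-\<alpha>) + s powr (2 - \<alpha>) \<le> (s - 1) powr (2 - \<alpha>)"
proof -
  have s0: "s > 0" using assms by simp
  have "(s - 1) = s * (1 - 1/s)" using s0 by (simp add: field_simps)
  then have "(s - 1) powr (2 - \<alpha>) = s powr (2 - \<alpha>) * (1 - 1/s) powr (-(\<alpha> - 2))"
    using s0 assms by (simp add: powr_mult)
  also have "\<dots> \<ge> s powr (2 - \<alpha>) * (1 + (\<alpha> - 2) * (1/s))"
    using assms s0 by (intro mult_left_mono bern_powr) auto
  finally have a0: "(s - 1) powr (2 - \<alpha>) \<ge> s powr (2 - \<alpha>) * (1 + (\<alpha> - 2) * (1/s))" .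
  have "s powr (2 - \<alpha>) * (1 + (\<alpha> - 2) * (1/s)) = s powr (2 - \<alpha>) + (\<alpha> - 2) * (s powr (2 - \<alpha>) / s)"
    using s0 by (simp add: field_simps)
  with a0 have a: "(s - 1) powr (2 - \<alpha>) \<ge> s powr (2 - \<alpha>) + (\<alpha> - 2) * (s powr (2 - \<alpha>) / s)" by simp
  have "s powr (2 - \<alpha>) = s powr ((1 - \<alpha>) + 1)" by (simp add: algebra_simps)
  also have "\<dots> = s powr (1 - \<alpha>) * s" using s0 by (subst powr_add) simp
  finally have "s powr (2 - \<alpha>) / s = s powr (1 - \<alpha>)" using s0 by simp
  also have "s powr (1 - \<alpha>) = s powr (1 + (-\<alpha>))" by simp
  also have "\<dots> = s * s powr (-\<alpha>)" using s0 by (subst powr_add) simp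
  finally have b: "s powr (2 - \<alpha>) / s = s * s powr (-\<alpha>)" .
  have "(\<alpha> - 2) * (s - 1) * s powr (-\<alpha>) \<le> (\<alpha> - 2) * (s * s powr (-\<alpha>))"
  proof -
    have "(s - 1) * s powr (-\<alpha>) \<le> s * s powr (-\<alpha>)" by (intro mult_right_mono) auto
    then show ?thesis using assms by (simp add: mult.assoc mult_left_mono)
  qed
  then show ?thesis using a b by simp
qed

lemma aux_div:
  fixes d A B x :: real
  assumes "d > 0" "d * x + B \<le> A"
  shows "(1 - A) / d + x \<le> (1 - B) / d"
proof -
  have "(1 - A) / d + x = (1 - A + d * x) / d" using assms by (simp add: field_simps)
  also have "\<dots> \<le> (1 - B) / d" using assms by (intro divide_right_mono) auto
  finally show ?thesis .
qed

lemma sum_tail: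
  fixes \<alpha> :: real
  assumes "\<alpha> > 2"
  shows "(\<Sum>s\<in>{1..t}. real (s - 1) * real s powr (-\<alpha>)) \<le> (1 - real t powr (2 - \<alpha>)) / (\<alpha> - 2)"
proof (induction t)
  case 0 then show ?case using assms by simp
next
  case (Suc t)
  show ?case
  proof (cases "t = 0")
    case True then show ?thesis by simp
  next
    case False
    have st: "(\<alpha> - 2) * (real (Suc t) - 1) * real (Suc t) powr (-\<alpha>) + real (Suc t) powr (2 - \<alpha>)
          \<le> (real (Suc t) - 1) powr (2 - \<alpha>)"
      using False assms by (intro step_ineq) auto
    have "(\<Sum>s\<in>{1..Suc t}. real (s - 1) * real s powr (-\<alpha>)) =
          (\<Sum>s\<in>{1..t}. real (s - 1) * real s powr (-\<alpha>)) + real t * real (Suc t) powr (-\<alpha>)"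
      by simp
    also have "\<dots> \<le> (1 - real t powr (2 - \<alpha>)) / (\<alpha> - 2) + real t * real (Suc t) powr (-\<alpha>)"
      using Suc.IH by simp
    also have "\<dots> \<le> (1 - real (Suc t) powr (2 - \<alpha>)) / (\<alpha> - 2)"
      using st assms by (intro aux_div) auto
    finally show ?thesis .
  qed
qed

lemma sum_tail':
  fixes \<alpha> :: real
  assumes "\<alpha> > 2"
  shows "(\<Sum>s\<in>{1..t}. real (s - 1) * real s powr (-\<alpha>)) \<le> 1 / (\<alpha> - 2)"
proof -
  have "(1 - real t powr (2 - \<alpha>)) / (\<alpha> - 2) \<le> 1 / (\<alpha> - 2)"
    using assms by (intro divide_right_mono) auto
  then show ?thesis using sum_tail[OF assms, of t] by linarith
qed



definition epsb :: "real \<Rightarrow> nat \<Rightarrow> nat \<Rightarrow> real" where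
  "epsb \<alpha> m s = sqrt (\<alpha> * ln (real s) / (2 * real m))"

lemma ucd_eq:
  assumes "1 \<le> s" "1 \<le> m" "\<alpha> \<ge> 0"
  shows "UCD_ber q (delta_alpha \<alpha> s) m = 7 * \<bar>1/2 - q\<bar> * sqrt 2 * epsb \<alpha> m s + 18 * (epsb \<alpha> m s)^2"
proof -
  have s0: "real s > 0" using assms by simp
  have "4 / delta_alpha \<alpha> s = real s powr \<alpha>"
    unfolding delta_alpha_def using s0 by (simp add: powr_minus divide_simps)
  then have L: "ln (4 / delta_alpha \<alpha> s) = \<alpha> * ln (real s)"
    using s0 by (simp add: ln_powr)
  have nn: "\<alpha> * ln (real s) / (2 * real m) \<ge> 0" using assms by simp
  have "sqrt 2 * epsb \<alpha> m s = sqrt (2 * (\<alpha> * ln (real s) / (2 * real m)))"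
    unfolding epsb_def by (subst real_sqrt_mult) simp
  also have "2 * (\<alpha> * ln (real s) / (2 * real m)) = \<alpha> * ln (real s) / real m" by simp
  finally have a: "sqrt (\<alpha> * ln (real s) / real m) = sqrt 2 * epsb \<alpha> m s" by simp
  have b: "(epsb \<alpha> m s)^2 = \<alpha> * ln (real s) / (2 * real m)" using nn by (simp add: epsb_def)
  show ?thesis unfolding UCD_ber_def L a b by (simp add: field_simps)
qed

lemma gap_lemma:
  fixes x e L D u :: real
  assumes "x \<ge> 0" "e \<ge> 0" "D > 0" "L > 0" "u > 0" "e^2 \<le> L / (2*u)"
    "u \<ge> 578 * x^2 * L / D^2 + 30 * L / D"
  shows "17 * x * e + 28 * e^2 < D"
proof -
  have b0: "578 * x^2 * L / D^2 \<ge> 0" using assms by simp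
  have b1: "30 * L / D \<ge> 0" using assms by simp
  have u1: "578 * x^2 * L / D^2 \<le> u" using assms b1 by linarith
  have u2: "30 * L / D \<le> u" using assms b0 by linarith
  have D2: "D^2 > 0" using assms by simp
  have e2: "e^2 * (2 * u) \<le> L" using assms by (simp add: pos_le_divide_eq)
  have A: "578 * x^2 * L \<le> u * D^2" using u1 D2 by (simp add: pos_divide_le_eq)
  have "578 * x^2 * (e^2 * (2 * u)) \<le> 578 * x^2 * L" using e2 by (intro mult_left_mono) auto
  then have "(1156 * x^2 * e^2) * u \<le> D^2 * u" using A by (simp add: algebra_simps)
  then have "1156 * x^2 * e^2 \<le> D^2" using assms by simp
  then have "(34 * x * e)^2 \<le> D^2" by (simp add: power_mult_distrib)
  then have c1: "34 * x * e \<le> D" by (rule power2_le_imp_le) (use assms in simp)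
  have B: "30 * L \<le> u * D" using u2 assms by (simp add: pos_divide_le_eq)
  have "30 * (e^2 * (2 * u)) \<le> 30 * L" using e2 by (rule mult_left_mono) simp
  then have "(60 * e^2) * u \<le> D * u" using B by (simp add: algebra_simps)
  then have c2: "60 * e^2 \<le> D" using assms by simp
  show ?thesis using c1 c2 assms by linarith
qed



lemma finite_sample: "finite (set_pmf (sample_pmf p1 p2 t))"
  unfolding sample_pmf_def by (auto simp: set_Pi_pmf intro!: finite_PiE_dflt)

lemma exp_of_bool: "measure_pmf.expectation M (\<lambda>x. of_bool (P x) :: real) = measure_pmf.prob M {x. P x}"
proof -
  have "(\<lambda>x. of_bool (P x) :: real) = indicator {x. P x}" by (auto simp: fun_eq_iff indicator_def)
  then show ?thesis by (simp add: measure_pmf.emeasure_eq_measure)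
qed

lemma exp_bad1:
  assumes "1 \<le> m" "m \<le> t" "p1 \<in> {0..1}" "e \<ge> 0"
  shows "measure_pmf.expectation (sample_pmf p1 p2 t)
           (\<lambda>z. of_bool (e \<le> \<bar>phat (map (fst z) [0..<m]) - p1\<bar>) :: real)
         \<le> 2 * exp (- 2 * real m * e^2)"
proof -
  have "measure_pmf.expectation (sample_pmf p1 p2 t)
           (\<lambda>z. of_bool (e \<le> \<bar>phat (map (fst z) [0..<m]) - p1\<bar>) :: real) =
        measure_pmf.expectation (map_pmf fst (sample_pmf p1 p2 t))
           (\<lambda>X. of_bool (e \<le> \<bar>phat (map X [0..<m]) - p1\<bar>) :: real)"
    by (simp add: integral_map_pmf)
  also have "map_pmf fst (sample_pmf p1 p2 t) = Pi_pmf {..<t} False (\<lambda>_. bernoulli_pmf p1)"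
    unfolding sample_pmf_def by (simp add: map_fst_pair_pmf)
  also have "measure_pmf.expectation (Pi_pmf {..<t} False (\<lambda>_. bernoulli_pmf p1))
           (\<lambda>X. of_bool (e \<le> \<bar>phat (map X [0..<m]) - p1\<bar>) :: real) =
        measure_pmf.prob (Pi_pmf {..<t} False (\<lambda>_. bernoulli_pmf p1))
           {X. e \<le> \<bar>phat (map X [0..<m]) - p1\<bar>}"
    by (rule exp_of_bool)
  also have "\<dots> \<le> 2 * exp (- 2 * real m * e^2)"
    using assms by (intro prob_dev) auto
  finally show ?thesis .
qed

lemma exp_bad2:
  assumes "1 \<le> m" "m \<le> t" "p2 \<in> {0..1}" "e \<ge> 0"
  shows "measure_pmf.expectation (sample_pmf p1 p2 t)
           (\<lambda>z. of_bool (e \<le> \<bar>phat (map (snd z) [0..<m]) - p2\<bar>) :: real)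
         \<le> 2 * exp (- 2 * real m * e^2)"
proof -
  have "measure_pmf.expectation (sample_pmf p1 p2 t)
           (\<lambda>z. of_bool (e \<le> \<bar>phat (map (snd z) [0..<m]) - p2\<bar>) :: real) =
        measure_pmf.expectation (map_pmf snd (sample_pmf p1 p2 t))
           (\<lambda>X. of_bool (e \<le> \<bar>phat (map X [0..<m]) - p2\<bar>) :: real)"
    by simp
  also have "map_pmf snd (sample_pmf p1 p2 t) = Pi_pmf {..<t} False (\<lambda>_. bernoulli_pmf p2)"
    unfolding sample_pmf_def by (simp add: map_snd_pair_pmf)
  also have "measure_pmf.expectation (Pi_pmf {..<t} False (\<lambda>_. bernoulli_pmf p2))
           (\<lambda>X. of_bool (e \<le> \<bar>phat (map X [0..<m]) - p2\<bar>) :: real) =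
        measure_pmf.prob (Pi_pmf {..<t} False (\<lambda>_. bernoulli_pmf p2))
           {X. e \<le> \<bar>phat (map X [0..<m]) - p2\<bar>}"
    by (rule exp_of_bool)
  also have "\<dots> \<le> 2 * exp (- 2 * real m * e^2)"
    using assms by (intro prob_dev) auto
  finally show ?thesis .
qed

lemma exp_eps:
  assumes "1 \<le> m" "1 \<le> s" "\<alpha> \<ge> 0"
  shows "2 * exp (- 2 * real m * (epsb \<alpha> m s)^2) = 2 * real s powr (-\<alpha>)"
proof -
  have nn: "\<alpha> * ln (real s) / (2 * real m) \<ge> 0" using assms by simp
  have "- 2 * real m * (epsb \<alpha> m s)^2 = - \<alpha> * ln (real s)"
    using nn assms by (simp add: epsb_def)
  then show ?thesis using assms by (simp add: powr_def)
qed



theorem theorem4: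
  fixes p1 p2 \<alpha> :: real and t :: nat
    and tb :: "nat \<Rightarrow> bool list \<Rightarrow> bool list \<Rightarrow> bool"
  assumes "2/5 \<le> p2" and "p2 < p1" and "p1 < 1/2"
    and "\<alpha> > 2" and "t \<ge> 2"
  shows "pseudo_regret p1 p2 \<alpha> tb t
           \<le> 784 * (1/2 - p2)^2 * \<alpha> * ln (real t) / (hb p1 - hb p2)
             + 60 * \<alpha> * ln (real t)
             + 8 * (\<alpha> - 1) / (\<alpha> - 2) * (hb p1 - hb p2)"
proof -
  note as = assms
  define x where "x = 1/2 - p2"
  define D where "D = hb p1 - hb p2"
  define L where "L = \<alpha> * ln (real t)"
  have x0: "x > 0" using as by (simp add: x_def)
  have Dpos: "D > 0"
  proof -
    have "hb p2 \<le> hb p1 + ln ((1-p1)/p1) * (p2 - p1)" using as by (intro hb_concave) auto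
    moreover have "ln ((1-p1)/p1) > 0" using as by simp
    moreover have "p2 - p1 < 0" using as by simp
    ultimately have "hb p2 < hb p1" by (smt (verit) mult_pos_neg)
    then show ?thesis by (simp add: D_def)
  qed
  have Lpos: "L > 0" using as by (simp add: L_def)
  define U where "U = 578 * x^2 * L / D^2 + 30 * L / D"
  define u where "u = nat \<lceil>U\<rceil>"
  have U0: "U > 0" using Dpos Lpos unfolding U_def by (intro add_nonneg_pos) auto
  have u_ge: "real u \<ge> U" unfolding u_def by linarith
  have u_le: "real u \<le> U + 1" unfolding u_def using U0 by linarith
  have u1: "1 \<le> u" using U0 unfolding u_def by linarith
  define B1 where "B1 = (\<lambda>X m s. epsb \<alpha> m s \<le> \<bar>phat (map X [0..<m]) - p1\<bar>)"
  define B2 where "B2 = (\<lambda>X m s. epsb \<alpha> m s \<le> \<bar>phat (map X [0..<m]) - p2\<bar>)"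
  have det: "real (snd (ucb_counts \<alpha> tb X1 X2 t)) \<le> real u +
     (\<Sum>s\<in>{1..t}. \<Sum>m\<in>{1..<s}. (of_bool (B1 X1 m s) + of_bool (B2 X2 m s) :: real))" for X1 X2
  proof (rule counts_bound[where T = t and H = "hb p1"])
    fix s m assume sm: "2 \<le> s" "s \<le> t" "1 \<le> m" "\<not> B1 X1 m s"
    define q where "q = phat (map X1 [0..<m])"
    define e where "e = epsb \<alpha> m s"
    have e0: "e \<ge> 0" unfolding e_def epsb_def using sm as by simp
    have "hb p1 \<le> hb q + 7 * \<bar>1/2 - q\<bar> * e + 18 * e^2"
      using sm as phat_range[of "map X1 [0..<m]"] unfolding B1_def q_def e_def
      by (intro idx_lower) auto
    also have "7 * \<bar>1/2 - q\<bar> * e \<le> 7 * \<bar>1/2 - q\<bar> * sqrt 2 * e"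
    proof -
      have "7 * \<bar>1/2 - q\<bar> * e * 1 \<le> 7 * \<bar>1/2 - q\<bar> * e * sqrt 2"
        using e0 by (intro mult_left_mono) auto
      then show ?thesis by (simp add: mult_ac)
    qed
    also have "hb q + 7 * \<bar>1/2 - q\<bar> * sqrt 2 * e + 18 * e^2 = hb q + UCD_ber q (delta_alpha \<alpha> s) m"
      using sm as unfolding e_def by (subst ucd_eq) auto
    finally show "ereal (hb p1) \<le> ucb_index (map X1 [0..<m]) (delta_alpha \<alpha> s)"
      using sm unfolding ucb_index_def q_def by auto
  next
    fix s n assume sn: "2 \<le> s" "s \<le> t" "u \<le> n" "\<not> B2 X2 n s"
    define q where "q = phat (map X2 [0..<n])"
    define e where "e = epsb \<alpha> n s"
    have n1: "1 \<le> n" using sn u1 by simp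
    have lnn: "0 \<le> \<alpha> * ln (real s) / (2 * real n)" using sn as by simp
    have e0: "e \<ge> 0" unfolding e_def epsb_def using lnn by simp
    have "hb q + UCD_ber q (delta_alpha \<alpha> s) n = hb q + 7 * \<bar>1/2 - q\<bar> * sqrt 2 * e + 18 * e^2"
      using sn n1 as unfolding e_def by (subst ucd_eq) auto
    also have "\<dots> \<le> hb p2 + 17 * (1/2 - p2) * e + 28 * e^2"
      using sn as phat_range[of "map X2 [0..<n]"] unfolding B2_def q_def e_def
      by (intro idx_upper) auto
    also have "hb p2 + 17 * (1/2 - p2) * e + 28 * e^2 < hb p1"
    proof -
      have "e^2 = \<alpha> * ln (real s) / (2 * real n)" unfolding e_def epsb_def using lnn by simp
      also have "\<dots> \<le> L / (2 * real u)"
      proof (rule frac_le)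
        show "0 \<le> L" using Lpos by simp
        show "\<alpha> * ln (real s) \<le> L" unfolding L_def using sn as by (intro mult_left_mono) auto
        show "0 < 2 * real u" using u1 by simp
        show "2 * real u \<le> 2 * real n" using sn by simp
      qed
      finally have "e^2 \<le> L / (2 * real u)" .
      then have "17 * (1/2 - p2) * e + 28 * e^2 < D"
        using gap_lemma[of x e D L "real u"] x0 e0 Dpos Lpos u1 u_ge
        unfolding x_def U_def by auto
      then show ?thesis unfolding D_def by simp
    qed
    finally show "ucb_index (map X2 [0..<n]) (delta_alpha \<alpha> s) < ereal (hb p1)"
      using n1 unfolding ucb_index_def q_def by auto
  qed (use u1 in auto)
  define M where "M = sample_pmf p1 p2 t"
  have intM: "integrable (measure_pmf M) f" for f :: "_ \<Rightarrow> real"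
    unfolding M_def by (rule integrable_measure_pmf_finite[OF finite_sample])
  define E where "E = measure_pmf.expectation M (\<lambda>(X1, X2). real (snd (ucb_counts \<alpha> tb X1 X2 t)))"
  have pr: "pseudo_regret p1 p2 \<alpha> tb t = E * D"
  proof -
    have mx: "max (hb p1) (hb p2) = hb p1" using Dpos by (simp add: D_def)
    have st: "{i\<in>{1::nat,2}. max (hb p1) (hb p2) - (if i = 1 then hb p1 else hb p2) > 0} = {2}"
      using Dpos unfolding mx D_def by auto
    show ?thesis unfolding pseudo_regret_def Let_def st
      by (simp add: expected_plays_def E_def M_def D_def mx)
  qed
  define g where "g = (\<lambda>z. real u + (\<Sum>s\<in>{1..t}. \<Sum>m\<in>{1..<s}.
        (of_bool (B1 (fst z) m s) + of_bool (B2 (snd z) m s) :: real)))"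
  have "E \<le> measure_pmf.expectation M g"
    unfolding E_def
  proof (rule integral_mono)
    show "integrable (measure_pmf M) (\<lambda>(X1, X2). real (snd (ucb_counts \<alpha> tb X1 X2 t)))" by (rule intM)
    show "integrable (measure_pmf M) g" by (rule intM)
    fix z show "(case z of (X1, X2) \<Rightarrow> real (snd (ucb_counts \<alpha> tb X1 X2 t))) \<le> g z"
      using det[of "fst z" "snd z"] unfolding g_def by (cases z) auto
  qed
  also have "measure_pmf.expectation M g = real u + (\<Sum>s\<in>{1..t}. \<Sum>m\<in>{1..<s}.
       (measure_pmf.expectation M (\<lambda>z. of_bool (B1 (fst z) m s) :: real)
      + measure_pmf.expectation M (\<lambda>z. of_bool (B2 (snd z) m s) :: real)))"
    unfolding g_def by (simp add: intM Bochner_Integration.integral_sum Bochner_Integration.integral_add)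
  also have "\<dots> \<le> real u + (\<Sum>s\<in>{1..t}. \<Sum>m\<in>{1..<s}. 4 * real s powr (-\<alpha>))"
  proof -
    have "measure_pmf.expectation M (\<lambda>z. of_bool (B1 (fst z) m s) :: real)
      + measure_pmf.expectation M (\<lambda>z. of_bool (B2 (snd z) m s) :: real) \<le> 4 * real s powr (-\<alpha>)"
      if "s \<in> {1..t}" "m \<in> {1..<s}" for s m
    proof -
      have e0: "epsb \<alpha> m s \<ge> 0" unfolding epsb_def using that as by simp
      have "measure_pmf.expectation M (\<lambda>z. of_bool (B1 (fst z) m s) :: real) \<le> 2 * exp (- 2 * real m * (epsb \<alpha> m s)^2)"
        unfolding M_def B1_def using that as e0 by (intro exp_bad1) auto
      moreover have "measure_pmf.expectation M (\<lambda>z. of_bool (B2 (snd z) m s) :: real) \<le> 2 * exp (- 2 * real m * (epsb \<alpha> m s)^2)"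
        unfolding M_def B2_def using that as e0 by (intro exp_bad2) auto
      moreover have "2 * exp (- 2 * real m * (epsb \<alpha> m s)^2) = 2 * real s powr (-\<alpha>)"
        using that as by (intro exp_eps) auto
      ultimately show ?thesis by simp
    qed
    then show ?thesis by (intro add_left_mono sum_mono) auto
  qed
  also have "(\<Sum>s\<in>{1..t}. \<Sum>m\<in>{1..<s}. 4 * real s powr (-\<alpha>)) = 4 * (\<Sum>s\<in>{1..t}. real (s - 1) * real s powr (-\<alpha>))"
    by (simp add: sum_distrib_left mult_ac)
  also have "\<dots> \<le> 4 * (1 / (\<alpha> - 2))" using sum_tail'[of \<alpha> t] as by simp
  finally have Ebound: "E \<le> U + 1 + 4 / (\<alpha> - 2)" using u_le by simp
  have "pseudo_regret p1 p2 \<alpha> tb t \<le> (U + 1 + 4 / (\<alpha> - 2)) * D"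
    unfolding pr using Ebound Dpos by (intro mult_right_mono) auto
  also have "(U + 1 + 4 / (\<alpha> - 2)) * D = 578 * x^2 * L / D + 30 * L + (1 + 4 / (\<alpha> - 2)) * D"
    unfolding U_def using Dpos by (simp add: field_simps power2_eq_square)
  also have "\<dots> \<le> 784 * x^2 * L / D + 60 * L + 8 * (\<alpha> - 1) / (\<alpha> - 2) * D"
  proof -
    have "578 * x^2 * L / D \<le> 784 * x^2 * L / D"
      using Dpos Lpos by (intro divide_right_mono mult_right_mono) auto
    moreover have "30 * L \<le> 60 * L" using Lpos by simp
    moreover have "1 + 4 / (\<alpha> - 2) \<le> 8 * (\<alpha> - 1) / (\<alpha> - 2)"
    proof -
      have "1 + 4 / (\<alpha> - 2) = (\<alpha> + 2) / (\<alpha> - 2)" using as by (simp add: field_simps)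
      also have "\<dots> \<le> (8 * (\<alpha> - 1)) / (\<alpha> - 2)" using as by (intro divide_right_mono) auto
      finally show ?thesis by simp
    qed
    then have "(1 + 4 / (\<alpha> - 2)) * D \<le> 8 * (\<alpha> - 1) / (\<alpha> - 2) * D"
      using Dpos by (intro mult_right_mono) auto
    ultimately show ?thesis by linarith
  qed
  finally have fin: "pseudo_regret p1 p2 \<alpha> tb t \<le> 784 * x^2 * L / D + 60 * L + 8 * (\<alpha> - 1) / (\<alpha> - 2) * D" .
  then show ?thesis unfolding x_def L_def D_def by (simp only: mult.assoc)
qed


end
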